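(* Let $d\ge 3$ be odd. The group $G_d$ is neither torsion nor torsion-free: it contains elements of infinite order and nontrivial elements of finite order (namely the element $\xi_i=[a_{\overline{i+1}}^2,a_{\overline{i+2}}]\,([a_i,a_{\overline{i+1}}][a_{\overline{i+1}},a_{\overline{i+2}}])^{-1}$, which acts as $(i\ \overline{i+2})(\overline{i+1}\ \overline{i+3})$ on the first level with all first-level sections trivial, has order $3$ if $d=3$ and order $2$ if $d\ge5$).
   Context: Let $d\ge 3$, $X=\{1,\dots,d\}$, $T$ the $d$-regular rooted tree with vertex set $X^*$. $\mathrm{Aut}(T)$ is the group of root-preserving automorphisms with product left-to-right: $(gh)(u)=h(g(u))$. Sections $g|_u$ are defined by $g(uv)=g(u)\,g|_u(v)$; we write $g=(g|_1,\dots,g|_d)\lambda_g$ with $\lambda_g\in S_d$ the action on the first level; $e$ is the identity; $\overline{j}\in\{1,\dots,d\}$ denotes $j$ mod $d$. $G_d=\langle a_1,\dots,a_d\rangle\le\mathrm{Aut}(T)$ where $a_i$ acts on the first level as $(i\ \overline{i+1})$, with $a_i|_i=a_i$, $a_i|_{\overline{i+1}}=a_{\overline{i+1}}$, and $a_i|_x=e$ otherwise. Commutators: $[g,h]=g^{-1}h^{-1}gh$. *)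

theory Defs
  imports Main
begin

text \<open>The alphabet is X = {1..d}; vertices of the tree are words (nat lists) over X.
  Tree automorphisms are modelled as bijections of nat list that act on X* and are the
  identity on every list not in X*.\<close>

definition nxt :: "nat \<Rightarrow> nat \<Rightarrow> nat" where
  "nxt d i = i mod d + 1"

fun gen_rec :: "nat \<Rightarrow> nat \<Rightarrow> nat list \<Rightarrow> nat list" where
  "gen_rec d i [] = []"
| "gen_rec d i (x # w) =
     (if x = i then nxt d i # gen_rec d i w
      else if x = nxt d i then i # gen_rec d (nxt d i) w
      else x # w)"

text \<open>The generator a_i of G_d: swaps i and overline(i+1) on the first level, with
  section a_i at i, a_(i+1) at overline(i+1), trivial elsewhere.\<close>
definition gen :: "nat \<Rightarrow> nat \<Rightarrow> nat list \<Rightarrow> nat list" where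
  "gen d i u = (if set u \<subseteq> {1..d} then gen_rec d i u else u)"

definition pmul :: "('a \<Rightarrow> 'a) \<Rightarrow> ('a \<Rightarrow> 'a) \<Rightarrow> ('a \<Rightarrow> 'a)" where
  "pmul g h = h \<circ> g"

definition pinv :: "('a \<Rightarrow> 'a) \<Rightarrow> ('a \<Rightarrow> 'a)" where
  "pinv g = inv g"

definition comm :: "('a \<Rightarrow> 'a) \<Rightarrow> ('a \<Rightarrow> 'a) \<Rightarrow> ('a \<Rightarrow> 'a)" where
  "comm g h = pmul (pmul (pmul (pinv g) (pinv h)) g) h"

inductive_set Gd :: "nat \<Rightarrow> (nat list \<Rightarrow> nat list) set" for d :: nat where
  Gd_id: "id \<in> Gd d"
| Gd_gen: "g \<in> Gd d \<Longrightarrow> i \<in> {1..d} \<Longrightarrow> pmul g (gen d i) \<in> Gd d"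
| Gd_geninv: "g \<in> Gd d \<Longrightarrow> i \<in> {1..d} \<Longrightarrow> pmul g (pinv (gen d i)) \<in> Gd d"

definition xi :: "nat \<Rightarrow> nat \<Rightarrow> nat list \<Rightarrow> nat list" where
  "xi d i = (let a = gen d; i1 = nxt d i; i2 = nxt d i1 in
     pmul (comm (pmul (a i1) (a i1)) (a i2))
          (pinv (pmul (comm (a i) (a i1)) (comm (a i1) (a i2)))))"

definition tr :: "nat \<Rightarrow> nat \<Rightarrow> nat \<Rightarrow> nat" where
  "tr a b x = (if x = a then b else if x = b then a else x)"

text \<open>The permutation (i i+2)(i+1 i+3) of the first level, as a map x |-> (i i+2)((i+1 i+3) x)
  (the two transpositions commute for d >= 5; for d = 3 this is the composition realised by xi_i).\<close>
definition xi_perm :: "nat \<Rightarrow> nat \<Rightarrow> nat \<Rightarrow> nat" where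
  "xi_perm d i x = (let i1 = nxt d i; i2 = nxt d i1; i3 = nxt d i2 in tr i i2 (tr i1 i3 x))"

text \<open>g has order exactly k (powers of a single element do not depend on the product convention).\<close>
definition has_order :: "('a \<Rightarrow> 'a) \<Rightarrow> nat \<Rightarrow> bool" where
  "has_order g k \<longleftrightarrow> 0 < k \<and> g ^^ k = id \<and> (\<forall>n. 0 < n \<and> n < k \<longrightarrow> g ^^ n \<noteq> id)"

definition infinite_order :: "('a \<Rightarrow> 'a) \<Rightarrow> bool" where
  "infinite_order g \<longleftrightarrow> (\<forall>n > 0. g ^^ n \<noteq> id)"

definition torsion_group :: "('a \<Rightarrow> 'a) set \<Rightarrow> bool" where
  "torsion_group G \<longleftrightarrow> (\<forall>g \<in> G. \<exists>n > 0. g ^^ n = id)"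

definition torsion_free_group :: "('a \<Rightarrow> 'a) set \<Rightarrow> bool" where
  "torsion_free_group G \<longleftrightarrow> (\<forall>g \<in> G. g \<noteq> id \<longrightarrow> (\<forall>n > 0. g ^^ n \<noteq> id))"

end

theory Submission
  imports Defs
begin


lemma nxt_alt: "i \<in> {1..d} \<Longrightarrow> nxt d i = (if i = d then 1 else i + 1)"
  by (auto simp: nxt_def)

lemma nxt_ge1[simp]: "0 < d \<Longrightarrow> 1 \<le> nxt d i" by (simp add: nxt_def)
lemma nxt_le[simp]: "0 < d \<Longrightarrow> nxt d i \<le> d"
  unfolding nxt_def by (simp add: Suc_leI)
lemma nxt_in[simp]: "0 < d \<Longrightarrow> nxt d i \<in> {1..d}" by (simp add: nxt_def Suc_leI)
lemma nxt_ge1'[simp]: "0 < d \<Longrightarrow> Suc 0 \<le> nxt d i" by (simp add: nxt_def)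
lemma nxt_neq: "2 \<le> d \<Longrightarrow> i \<in> {1..d} \<Longrightarrow> nxt d i \<noteq> i"
  by (auto simp: nxt_alt)

fun ginv_rec :: "nat \<Rightarrow> nat \<Rightarrow> nat list \<Rightarrow> nat list" where
  "ginv_rec d i [] = []"
| "ginv_rec d i (x # w) =
     (if x = nxt d i then i # ginv_rec d i w
      else if x = i then nxt d i # ginv_rec d (nxt d i) w
      else x # w)"

definition ginv :: "nat \<Rightarrow> nat \<Rightarrow> nat list \<Rightarrow> nat list" where
  "ginv d i u = (if set u \<subseteq> {1..d} then ginv_rec d i u else u)"

lemma gen_rec_S: "0 < d \<Longrightarrow> i \<in> {1..d} \<Longrightarrow> set w \<subseteq> {1..d} \<Longrightarrow> set (gen_rec d i w) \<subseteq> {1..d}"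
proof (induction w arbitrary: i)
  case (Cons x w)
  then show ?case using Cons.IH[of i] Cons.IH[of "nxt d i"] nxt_in[of d i] by auto
qed simp

lemma ginv_rec_S: "0 < d \<Longrightarrow> i \<in> {1..d} \<Longrightarrow> set w \<subseteq> {1..d} \<Longrightarrow> set (ginv_rec d i w) \<subseteq> {1..d}"
proof (induction w arbitrary: i)
  case (Cons x w)
  then show ?case using Cons.IH[of i] Cons.IH[of "nxt d i"] nxt_in[of d i] by auto
qed simp

lemma gen_S[simp]: "0 < d \<Longrightarrow> i \<in> {1..d} \<Longrightarrow> set (gen d i w) \<subseteq> {1..d} \<longleftrightarrow> set w \<subseteq> {1..d}"
  using gen_rec_S[of d i w] by (auto simp: gen_def)
lemma ginv_S[simp]: "0 < d \<Longrightarrow> i \<in> {1..d} \<Longrightarrow> set (ginv d i w) \<subseteq> {1..d} \<longleftrightarrow> set w \<subseteq> {1..d}"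
  using ginv_rec_S[of d i w] by (auto simp: ginv_def)

lemma gen_ginv_rec: "2 \<le> d \<Longrightarrow> i \<in> {1..d} \<Longrightarrow> set w \<subseteq> {1..d} \<Longrightarrow> gen_rec d i (ginv_rec d i w) = w"
proof (induction w arbitrary: i)
  case Nil then show ?case by simp
next
  case (Cons x w)
  have n: "nxt d i \<noteq> i" using Cons nxt_neq by blast
  have n2: "nxt d i \<in> {1..d}" using Cons by (intro nxt_in) simp
  show ?case using Cons.IH[of i] Cons.IH[OF Cons.prems(1) n2] Cons.prems n by auto
qed

lemma ginv_gen_rec: "2 \<le> d \<Longrightarrow> i \<in> {1..d} \<Longrightarrow> set w \<subseteq> {1..d} \<Longrightarrow> ginv_rec d i (gen_rec d i w) = w"
proof (induction w arbitrary: i)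
  case Nil then show ?case by simp
next
  case (Cons x w)
  have n: "nxt d i \<noteq> i" using Cons nxt_neq by blast
  have n2: "nxt d i \<in> {1..d}" using Cons by (intro nxt_in) simp
  show ?case using Cons.IH[of i] Cons.IH[OF Cons.prems(1) n2] Cons.prems n by auto
qed

lemma gen_ginv[simp]: "2 \<le> d \<Longrightarrow> i \<in> {1..d} \<Longrightarrow> gen d i (ginv d i u) = u"
  using ginv_rec_S[of d i u] gen_ginv_rec[of d i u] by (auto simp: gen_def ginv_def)
lemma ginv_gen[simp]: "2 \<le> d \<Longrightarrow> i \<in> {1..d} \<Longrightarrow> ginv d i (gen d i u) = u"
  using gen_rec_S[of d i u] ginv_gen_rec[of d i u] by (auto simp: gen_def ginv_def)

lemma bij_gen: "2 \<le> d \<Longrightarrow> i \<in> {1..d} \<Longrightarrow> bij (gen d i)"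
  by (rule o_bij[of "ginv d i"]) (auto simp: fun_eq_iff)

lemma inv_gen: "2 \<le> d \<Longrightarrow> i \<in> {1..d} \<Longrightarrow> inv (gen d i) = ginv d i"
  by (rule inv_unique_comp) (auto simp: fun_eq_iff)

lemma gen_Cons: "x \<in> {1..d} \<Longrightarrow> set w \<subseteq> {1..d} \<Longrightarrow>
  gen d j (x#w) = (if x = j then nxt d j # gen d j w else if x = nxt d j then j # gen d (nxt d j) w else x#w)"
  by (simp add: gen_def)
lemma ginv_Cons: "x \<in> {1..d} \<Longrightarrow> set w \<subseteq> {1..d} \<Longrightarrow>
  ginv d j (x#w) = (if x = nxt d j then j # ginv d j w else if x = j then nxt d j # ginv d (nxt d j) w else x#w)"
  by (simp add: ginv_def)

lemma gen_out: "\<not> set u \<subseteq> {1..d} \<Longrightarrow> gen d j u = u" by (simp add: gen_def)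
lemma ginv_out: "\<not> set u \<subseteq> {1..d} \<Longrightarrow> ginv d j u = u" by (simp add: ginv_def)
lemma gen_Nil[simp]: "gen d j [] = []" by (simp add: gen_def)
lemma ginv_Nil[simp]: "ginv d j [] = []" by (simp add: ginv_def)



lemma bij_ginv: "2 \<le> d \<Longrightarrow> i \<in> {1..d} \<Longrightarrow> bij (ginv d i)"
  by (rule o_bij[of "gen d i"]) (auto simp: fun_eq_iff)

lemma inv_ginv: "2 \<le> d \<Longrightarrow> i \<in> {1..d} \<Longrightarrow> inv (ginv d i) = gen d i"
  by (rule inv_unique_comp) (auto simp: fun_eq_iff)

lemma xi_expl:
  assumes d: "2 \<le> d" and i: "i \<in> {1..d}"
  shows "xi d i = gen d i \<circ> gen d (nxt d i) \<circ> ginv d i \<circ> gen d (nxt d (nxt d i)) \<circ> gen d (nxt d i)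
     \<circ> ginv d (nxt d (nxt d i)) \<circ> ginv d (nxt d i) \<circ> ginv d (nxt d i)"
proof -
  have d0: "0 < d" using d by simp
  note b = bij_gen[OF d] bij_ginv[OF d] inv_gen[OF d] inv_ginv[OF d] nxt_in[OF d0]
  have i1: "nxt d i \<in> {1..d}" "nxt d (nxt d i) \<in> {1..d}" using d0 by auto
  show ?thesis
    unfolding xi_def Let_def comm_def pmul_def pinv_def
    using i i1 d
    by (simp add: o_inv_distrib bij_comp b fun_eq_iff)
qed



definition L :: "nat \<Rightarrow> nat \<Rightarrow> bool" where "L d x \<longleftrightarrow> x \<in> {1..d}"
definition inS :: "nat \<Rightarrow> nat list \<Rightarrow> bool" where "inS d w \<longleftrightarrow> set w \<subseteq> {1..d}"

lemma L_nxt: "0 < d \<Longrightarrow> L d (nxt d j)" by (simp add: L_def)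
lemma inS_gen: "0 < d \<Longrightarrow> L d j \<Longrightarrow> inS d (gen d j w) = inS d w"
  unfolding L_def inS_def by (rule gen_S)
lemma inS_ginv: "0 < d \<Longrightarrow> L d j \<Longrightarrow> inS d (ginv d j w) = inS d w"
  unfolding L_def inS_def by (rule ginv_S)
lemma gen_Cons': "L d x \<Longrightarrow> inS d w \<Longrightarrow>
  gen d j (x#w) = (if x = j then nxt d j # gen d j w else if x = nxt d j then j # gen d (nxt d j) w else x#w)"
  by (simp add: gen_Cons L_def inS_def)
lemma ginv_Cons': "L d x \<Longrightarrow> inS d w \<Longrightarrow>
  ginv d j (x#w) = (if x = nxt d j then j # ginv d j w else if x = j then nxt d j # ginv d (nxt d j) w else x#w)"
  by (simp add: ginv_Cons L_def inS_def)
lemma gen_ginv': "2 \<le> d \<Longrightarrow> L d i \<Longrightarrow> gen d i (ginv d i u) = u" by (simp add: L_def)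
lemma ginv_gen': "2 \<le> d \<Longrightarrow> L d i \<Longrightarrow> ginv d i (gen d i u) = u" by (simp add: L_def)

lemma xi_Cons_gen:
  assumes d: "2 \<le> d" and i: "i \<in> {1..d}"
    and x: "x \<in> {1..d}" and w: "set w \<subseteq> {1..d}"
    and n01: "nxt d i \<noteq> i" and n02: "nxt d (nxt d i) \<noteq> i" and n12: "nxt d (nxt d i) \<noteq> nxt d i"
    and n13: "nxt d (nxt d (nxt d i)) \<noteq> nxt d i" and n23: "nxt d (nxt d (nxt d i)) \<noteq> nxt d (nxt d i)"
  shows "xi d i (x # w) = xi_perm d i x # w"
proof -
  have d0: "0 < d" using d by simp
  have iL: "L d i" "L d x" "inS d w" using i x w by (auto simp: L_def inS_def)
  note ns = n01 n02 n12 n13 n23 n01[symmetric] n02[symmetric] n12[symmetric] n13[symmetric] n23[symmetric]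
  show ?thesis
    unfolding xi_expl[OF d i] xi_perm_def tr_def Let_def
    using iL d d0 ns
    by (simp add: gen_Cons' ginv_Cons' L_nxt inS_gen inS_ginv gen_ginv' ginv_gen' del: gen_ginv ginv_gen)
qed



lemma nxt_in': "j \<in> {1..d} \<Longrightarrow> nxt d j \<in> {1..d}" by (intro nxt_in) auto

lemma nxt_lt: "0 < j \<Longrightarrow> j < d \<Longrightarrow> nxt d j = Suc j" by (simp add: nxt_def)
lemma nxt_d: "0 < d \<Longrightarrow> nxt d d = 1" by (simp add: nxt_def)

lemma nxt2_neq: assumes "3 \<le> d" "j \<in> {1..d}" shows "nxt d (nxt d j) \<noteq> j"
proof -
  consider "j = d" | "j = d - 1" | "j < d - 1" using assms by fastforce
  then show ?thesis
  proof cases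
    case 1 then show ?thesis using assms by (simp add: nxt_d nxt_lt)
  next
    case 2 then have "nxt d j = d" using assms by (simp add: nxt_lt)
    then show ?thesis using assms 2 by (simp add: nxt_d)
  next
    case 3 then show ?thesis using assms by (simp add: nxt_lt)
  qed
qed

lemma nxt3_neq: assumes "4 \<le> d" "j \<in> {1..d}" shows "nxt d (nxt d (nxt d j)) \<noteq> j"
proof -
  consider "j = d" | "j = d - 1" | "j = d - 2" | "j < d - 2" using assms by fastforce
  then show ?thesis
  proof cases
    case 1 then show ?thesis using assms by (simp add: nxt_d nxt_lt)
  next
    case 2 then have "nxt d j = d" using assms by (simp add: nxt_lt)
    then show ?thesis using assms 2 by (simp add: nxt_d nxt_lt)
  next
    case 3 then have "nxt d (nxt d j) = d" using assms by (simp add: nxt_lt)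
    then show ?thesis using assms 3 by (simp add: nxt_d)
  next
    case 4 then show ?thesis using assms by (simp add: nxt_lt)
  qed
qed

lemma xi_Cons:
  assumes d: "3 \<le> d" and i: "i \<in> {1..d}" and x: "x \<in> {1..d}" and w: "set w \<subseteq> {1..d}"
  shows "xi d i (x # w) = xi_perm d i x # w"
proof -
  have i1: "nxt d i \<in> {1..d}" "nxt d (nxt d i) \<in> {1..d}" using i by (auto intro!: nxt_in')
  show ?thesis
    apply (rule xi_Cons_gen)
    using d i x w i1 nxt_neq[of d i] nxt_neq[of d "nxt d i"] nxt_neq[of d "nxt d (nxt d i)"]
      nxt2_neq[of d i] nxt2_neq[of d "nxt d i"] by auto
qed

lemma xi_out: assumes d: "2 \<le> d" and i: "i \<in> {1..d}" and u: "\<not> set u \<subseteq> {1..d}"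
  shows "xi d i u = u"
proof -
  have i1: "nxt d i \<in> {1..d}" "nxt d (nxt d i) \<in> {1..d}" using i d by (auto intro!: nxt_in')
  show ?thesis unfolding xi_expl[OF d i] using u i1 d i by (simp add: gen_out ginv_out)
qed

lemma xi_Nil: assumes d: "2 \<le> d" and i: "i \<in> {1..d}" shows "xi d i [] = []"
  unfolding xi_expl[OF d i] by simp

lemma xi_perm_in: assumes "x \<in> {1..d}" "i \<in> {1..d}" shows "xi_perm d i x \<in> {1..d}"
proof -
  have "nxt d i \<in> {1..d}" "nxt d (nxt d i) \<in> {1..d}" "nxt d (nxt d (nxt d i)) \<in> {1..d}"
    using assms by (auto intro!: nxt_in')
  then show ?thesis using assms by (auto simp: xi_perm_def tr_def Let_def)
qed

lemma xi_perm_pow_in: "x \<in> {1..d} \<Longrightarrow> i \<in> {1..d} \<Longrightarrow> (xi_perm d i ^^ n) x \<in> {1..d}"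
proof (induction n)
  case (Suc n) then show ?case using xi_perm_in[of "(xi_perm d i ^^ n) x" d i] by simp
qed simp

lemma xi_pow:
  assumes d: "3 \<le> d" and i: "i \<in> {1..d}" and x: "x \<in> {1..d}" and w: "set w \<subseteq> {1..d}"
  shows "(xi d i ^^ n) (x # w) = (xi_perm d i ^^ n) x # w"
  by (induction n) (use assms xi_perm_pow_in in \<open>auto simp: xi_Cons\<close>)

lemma xi_pow_id:
  assumes d: "3 \<le> d" and i: "i \<in> {1..d}"
  shows "(xi d i ^^ n = id) \<longleftrightarrow> (\<forall>x \<in> {1..d}. (xi_perm d i ^^ n) x = x)"
proof
  assume h: "xi d i ^^ n = id"
  show "\<forall>x \<in> {1..d}. (xi_perm d i ^^ n) x = x"
  proof
    fix x assume x: "x \<in> {1..d}"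
    have "(xi d i ^^ n) [x] = [x]" using h by simp
    then show "(xi_perm d i ^^ n) x = x" using xi_pow[OF d i x, of "[]"] by simp
  qed
next
  assume h: "\<forall>x \<in> {1..d}. (xi_perm d i ^^ n) x = x"
  have o: "(xi d i ^^ n) u = u" if "\<not> set u \<subseteq> {1..d} \<or> u = []" for u
  proof (induction n)
    case (Suc n)
    have "xi d i u = u" using that xi_out[OF _ i, of u] xi_Nil[OF _ i] d by auto
    then show ?case using Suc by simp
  qed simp
  show "xi d i ^^ n = id"
  proof
    fix u show "(xi d i ^^ n) u = id u"
    proof (cases "set u \<subseteq> {1..d} \<and> u \<noteq> []")
      case True
      then obtain x w where u: "u = x # w" by (cases u) auto
      then show ?thesis using True xi_pow[OF d i, of x w n] h by auto
    qed (use o in auto)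
  qed
qed



lemma xi_order5:
  assumes d: "4 \<le> d" and i: "i \<in> {1..d}"
  shows "has_order (xi d i) 2"
proof -
  have d3: "3 \<le> d" using d by simp
  have i1: "nxt d i \<in> {1..d}" "nxt d (nxt d i) \<in> {1..d}" using i by (auto intro!: nxt_in')
  have ne: "nxt d i \<noteq> i" "nxt d (nxt d i) \<noteq> nxt d i" "nxt d (nxt d (nxt d i)) \<noteq> nxt d (nxt d i)"
     "nxt d (nxt d i) \<noteq> i" "nxt d (nxt d (nxt d i)) \<noteq> nxt d i" "nxt d (nxt d (nxt d i)) \<noteq> i"
    using d i i1 nxt_neq[of d i] nxt_neq[of d "nxt d i"] nxt_neq[of d "nxt d (nxt d i)"]
      nxt2_neq[of d i] nxt2_neq[of d "nxt d i"] nxt3_neq[of d i] by auto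
  have p2: "(xi_perm d i ^^ 2) x = x" for x
    using ne ne[symmetric] by (simp add: xi_perm_def tr_def Let_def numeral_2_eq_2)
  have p1: "(xi_perm d i ^^ 1) i \<noteq> i"
    using ne ne[symmetric] by (simp add: xi_perm_def tr_def Let_def)
  have "xi d i ^^ 2 = id" using xi_pow_id[OF d3 i] p2 by simp
  moreover have "xi d i ^^ 1 \<noteq> id" using xi_pow_id[OF d3 i, of 1] p1 i by blast
  ultimately show ?thesis unfolding has_order_def
  proof (intro conjI allI impI)
    fix n :: nat assume "xi d i ^^ 1 \<noteq> id" "0 < n \<and> n < 2"
    moreover then have "n = 1" by simp
    ultimately show "xi d i ^^ n \<noteq> id" by simp
  qed auto
qed


lemma d3_facts:
  assumes i: "i \<in> {1..(3::nat)}"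
  shows "nxt 3 (nxt 3 (nxt 3 i)) = i" "nxt 3 i \<noteq> i" "nxt 3 (nxt 3 i) \<noteq> i" "nxt 3 (nxt 3 i) \<noteq> nxt 3 i"
    "\<forall>x\<in>{1..3}. x = i \<or> x = nxt 3 i \<or> x = nxt 3 (nxt 3 i)"
proof -
  have c: "i = 1 \<or> i = 2 \<or> i = 3" using i by auto
  have n: "nxt 3 1 = 2" "nxt 3 2 = 3" "nxt 3 3 = 1" by (simp_all add: nxt_def)
  show "nxt 3 (nxt 3 (nxt 3 i)) = i" "nxt 3 i \<noteq> i" "nxt 3 (nxt 3 i) \<noteq> i" "nxt 3 (nxt 3 i) \<noteq> nxt 3 i"
    using c n by auto
  show "\<forall>x\<in>{1..3}. x = i \<or> x = nxt 3 i \<or> x = nxt 3 (nxt 3 i)"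
  proof
    fix x :: nat assume "x \<in> {1..3}"
    then have "x = 1 \<or> x = 2 \<or> x = 3" by auto
    then show "x = i \<or> x = nxt 3 i \<or> x = nxt 3 (nxt 3 i)" using c n by auto
  qed
qed

lemma xi_order3:
  assumes i: "i \<in> {1..3}"
  shows "has_order (xi 3 i) 3"
proof -
  note f = d3_facts[OF i]
  have ne: "nxt 3 i \<noteq> i" "nxt 3 (nxt 3 i) \<noteq> i" "nxt 3 (nxt 3 i) \<noteq> nxt 3 i" using f by auto
  have p: "xi_perm 3 i i = nxt 3 i" "xi_perm 3 i (nxt 3 i) = nxt 3 (nxt 3 i)" "xi_perm 3 i (nxt 3 (nxt 3 i)) = i"
    using ne ne[symmetric] f(1) by (simp_all add: xi_perm_def tr_def Let_def)
  have p3: "\<forall>x\<in>{1..3}. (xi_perm 3 i ^^ 3) x = x"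
  proof
    fix x :: nat assume "x \<in> {1..3}"
    then have "x = i \<or> x = nxt 3 i \<or> x = nxt 3 (nxt 3 i)" using f(5) by blast
    then show "(xi_perm 3 i ^^ 3) x = x" using p by (auto simp: numeral_3_eq_3)
  qed
  have p12: "(xi_perm 3 i ^^ n) i \<noteq> i" if "n = 1 \<or> n = 2" for n
    using that p ne by (auto simp: numeral_2_eq_2)
  have "xi 3 i ^^ 3 = id" using xi_pow_id[of 3 i 3] i p3 by simp
  moreover have "xi 3 i ^^ n \<noteq> id" if "0 < n" "n < 3" for n
  proof -
    have "n = 1 \<or> n = 2" using that by auto
    then show ?thesis using xi_pow_id[of 3 i n] p12[of n] i by auto
  qed
  ultimately show ?thesis unfolding has_order_def by auto
qed



lemma Gd_comp: "f \<in> Gd d \<Longrightarrow> g \<in> Gd d \<Longrightarrow> f \<circ> g \<in> Gd d"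
proof (induction f rule: Gd.induct)
  case Gd_id then show ?case by simp
next
  case (Gd_gen f i)
  have "pmul (f \<circ> g) (gen d i) \<in> Gd d" using Gd_gen by (intro Gd.Gd_gen)
  then show ?case unfolding pmul_def by (simp only: comp_assoc)
next
  case (Gd_geninv f i)
  have "pmul (f \<circ> g) (pinv (gen d i)) \<in> Gd d" using Gd_geninv by (intro Gd.Gd_geninv)
  then show ?case unfolding pmul_def by (simp only: comp_assoc)
qed

lemma Gd_gen1: "i \<in> {1..d} \<Longrightarrow> gen d i \<in> Gd d"
  using Gd.Gd_gen[OF Gd.Gd_id, of i d] by (simp add: pmul_def)
lemma Gd_ginv1: "2 \<le> d \<Longrightarrow> i \<in> {1..d} \<Longrightarrow> ginv d i \<in> Gd d"
  using Gd.Gd_geninv[OF Gd.Gd_id, of i d] by (simp add: pmul_def pinv_def inv_gen)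

lemma xi_Gd: assumes d: "2 \<le> d" and i: "i \<in> {1..d}" shows "xi d i \<in> Gd d"
proof -
  have i1: "nxt d i \<in> {1..d}" "nxt d (nxt d i) \<in> {1..d}" using i d by (auto intro!: nxt_in')
  show ?thesis unfolding xi_expl[OF d i]
    by (intro Gd_comp Gd_gen1 Gd_ginv1 i i1 d)
qed

definition CL :: "nat \<Rightarrow> nat list \<Rightarrow> nat list \<Rightarrow> nat list" where
  "CL d js = foldr (\<lambda>j f. gen d j \<circ> f) js id"

lemma CL_Nil[simp]: "CL d [] = id" by (simp add: CL_def)
lemma CL_Cons[simp]: "CL d (j # js) = gen d j \<circ> CL d js" by (simp add: CL_def)
lemma CL_append: "CL d (xs @ ys) = CL d xs \<circ> CL d ys"
  by (induction xs) auto

lemma CL_Gd: "set js \<subseteq> {1..d} \<Longrightarrow> CL d js \<in> Gd d"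
proof (induction js)
  case Nil show ?case unfolding CL_Nil by (rule Gd.Gd_id)
next
  case (Cons j js)
  then have "j \<in> {1..d}" "CL d js \<in> Gd d" by auto
  then show ?case unfolding CL_Cons by (intro Gd_comp Gd_gen1)
qed

lemma CL_S: "0 < d \<Longrightarrow> set js \<subseteq> {1..d} \<Longrightarrow> set w \<subseteq> {1..d} \<Longrightarrow> set (CL d js w) \<subseteq> {1..d}"
proof (induction js)
  case (Cons j js)
  then have "j \<in> {1..d}" "set (CL d js w) \<subseteq> {1..d}" by auto
  then show ?case using gen_S[of d j "CL d js w"] Cons.prems by simp
qed simp

lemma CL_onto: "2 \<le> d \<Longrightarrow> set js \<subseteq> {1..d} \<Longrightarrow> set u \<subseteq> {1..d} \<Longrightarrow> \<exists>v. set v \<subseteq> {1..d} \<and> CL d js v = u"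
proof (induction js arbitrary: u)
  case Nil then show ?case by auto
next
  case (Cons j js)
  have j: "j \<in> {1..d}" using Cons by auto
  have "set (ginv d j u) \<subseteq> {1..d}" using Cons.prems j ginv_S[of d j u] by simp
  moreover have "set js \<subseteq> {1..d}" using Cons.prems by simp
  ultimately obtain v where "set v \<subseteq> {1..d}" "CL d js v = ginv d j u"
    using Cons.IH[of "ginv d j u"] Cons.prems(1) by blast
  then show ?case using j Cons.prems by (intro exI[of _ v]) simp
qed

lemma gen_fix: "y \<noteq> j \<Longrightarrow> y \<noteq> nxt d j \<Longrightarrow> gen d j (y # v) = y # v"
  by (simp add: gen_def)

lemma CL_fix: "\<forall>j\<in>set js. y \<noteq> j \<and> y \<noteq> nxt d j \<Longrightarrow> CL d js (y # v) = y # v"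
  by (induction js) (auto simp: gen_fix)

lemma upt_split: "i \<le> j \<Longrightarrow> j \<le> k \<Longrightarrow> [i..<k] = [i..<j] @ [j..<k]"
  using upt_add_eq_append[of i j "k - j"] by simp



definition gg :: "nat \<Rightarrow> nat list \<Rightarrow> nat list" where "gg d = CL d (rev [1..<Suc d])"
definition hh :: "nat \<Rightarrow> nat list \<Rightarrow> nat list" where "hh d = CL d [1..<Suc d]"

lemma nxt_ne_small: "j \<in> {1..d} \<Longrightarrow> 2 \<le> y \<Longrightarrow> y \<le> j \<Longrightarrow> nxt d j \<noteq> y"
  by (auto simp: nxt_alt)

lemma gg_x: assumes d: "3 \<le> d" and x: "3 \<le> x" "x \<le> d" and w: "set w \<subseteq> {1..d}"
  shows "gg d (x # w) = (x - 1) # gen d x w"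
proof -
  have sp: "[1..<Suc d] = [1..<x-1] @ (x-1) # [x..<Suc d]"
    using upt_split[of 1 "x-1" "Suc d"] upt_conv_Cons[of "x-1" "Suc d"] x by auto
  have f1: "CL d (rev [1..<x-1]) (x # w) = x # w"
  proof (rule CL_fix, intro ballI)
    fix j assume "j \<in> set (rev [1..<x-1])"
    then have "1 \<le> j" "j < x - 1" by auto
    then show "x \<noteq> j \<and> x \<noteq> nxt d j" using x nxt_lt[of j d] by auto
  qed
  have nx: "nxt d (x - 1) = x" using x by (simp add: nxt_lt)
  have f2: "gen d (x-1) (x # w) = (x-1) # gen d x w"
    using gen_Cons[of x d w "x-1"] x w nx by auto
  have f3: "CL d (rev [x..<Suc d]) ((x-1) # v) = (x-1) # v" for v
  proof (rule CL_fix, intro ballI)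
    fix j assume "j \<in> set (rev [x..<Suc d])"
    then have j: "x \<le> j" "j \<le> d" by (simp_all del: upt_Suc)
    have "nxt d j \<noteq> x - 1" using j x by (intro nxt_ne_small) auto
    then show "x - 1 \<noteq> j \<and> x - 1 \<noteq> nxt d j" using j x by auto
  qed
  show ?thesis unfolding gg_def sp using f1 f2 f3 by (simp add: CL_append)
qed

lemma gg_2: assumes d: "3 \<le> d" and w: "set w \<subseteq> {1..d}"
  shows "gg d (2 # w) = d # gen d 1 (gen d 2 w)"
proof -
  have sp: "[1..<Suc d] = 1 # [2..<d] @ [d]"
    using upt_conv_Cons[of 1 "Suc d"] upt_Suc_append[of 2 d] d by (auto simp: numeral_2_eq_2)
  have n1: "nxt d 1 = 2" using d by (simp add: nxt_lt)
  have f1: "gen d 1 (2 # w) = 1 # gen d 2 w" using gen_Cons[of 2 d w 1] d w n1 by auto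
  have f2: "CL d (rev [2..<d]) (1 # v) = 1 # v" for v
    by (rule CL_fix) (auto simp: nxt_lt)
  have f3: "gen d d (1 # v) = d # gen d 1 v" if "set v \<subseteq> {1..d}" for v
    using gen_Cons[of 1 d v d] d that nxt_d[of d] by auto
  have s: "set (gen d 2 w) \<subseteq> {1..d}" using w d gen_S[of d 2 w] by simp
  show ?thesis unfolding gg_def sp using f1 f2 f3 s by (simp add: CL_append)
qed

lemma hh_x: assumes d: "3 \<le> d" and x: "2 \<le> x" "x < d" and w: "set w \<subseteq> {1..d}"
  shows "hh d (x # w) = Suc x # gen d x w"
proof -
  have sp: "[1..<Suc d] = [1..<x] @ x # [Suc x..<Suc d]"
    using upt_split[of 1 x "Suc d"] upt_conv_Cons[of x "Suc d"] x by auto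
  have f1: "CL d [Suc x..<Suc d] (x # w) = x # w"
  proof (rule CL_fix, intro ballI)
    fix j assume "j \<in> set [Suc x..<Suc d]"
    then have j: "x < j" "j \<le> d" by (simp_all del: upt_Suc)
    have "nxt d j \<noteq> x" using j x by (intro nxt_ne_small) auto
    then show "x \<noteq> j \<and> x \<noteq> nxt d j" using j x by auto
  qed
  have f2: "gen d x (x # w) = Suc x # gen d x w"
    using gen_Cons[of x d w x] x w nxt_lt[of x d] by auto
  have f3: "CL d [1..<x] (Suc x # v) = Suc x # v" for v
    by (rule CL_fix) (use x in \<open>auto simp: nxt_lt\<close>)
  show ?thesis unfolding hh_def sp using f1 f2 f3 by (simp add: CL_append)
qed

lemma hh_d: assumes d: "3 \<le> d" and w: "set w \<subseteq> {1..d}"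
  shows "hh d (d # w) = 2 # gen d 1 (gen d d w)"
proof -
  have sp: "[1..<Suc d] = 1 # [2..<d] @ [d]"
    using upt_conv_Cons[of 1 "Suc d"] upt_Suc_append[of 2 d] d by (auto simp: numeral_2_eq_2)
  have f1: "gen d d (d # w) = 1 # gen d d w" using gen_Cons[of d d w d] d w nxt_d[of d] by auto
  have f2: "CL d [2..<d] (1 # v) = 1 # v" for v
    by (rule CL_fix) (auto simp: nxt_lt)
  have f3: "gen d 1 (1 # v) = 2 # gen d 1 v" if "set v \<subseteq> {1..d}" for v
    using gen_Cons[of 1 d v 1] d that nxt_lt[of 1 d] by auto
  have s: "set (gen d d w) \<subseteq> {1..d}" using w d gen_S[of d d w] by simp
  show ?thesis unfolding hh_def sp using f1 f2 f3 s by (simp add: CL_append)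
qed



lemma gen12_S: "3 \<le> d \<Longrightarrow> set w \<subseteq> {1..d} \<Longrightarrow> set (gen d 1 (gen d 2 w)) \<subseteq> {1..d}"
  using gen_S[of d 2 w] gen_S[of d 1 "gen d 2 w"] by simp

lemma gg_pow: assumes d: "3 \<le> d" and w: "set w \<subseteq> {1..d}"
  shows "1 \<le> m \<Longrightarrow> m \<le> d - 1 \<Longrightarrow>
    (gg d ^^ m) (2 # w) = (Suc d - m) # CL d [Suc (Suc d) - m..<Suc d] (gen d 1 (gen d 2 w))"
proof (induction m)
  case 0 then show ?case by simp
next
  case (Suc m)
  show ?case
  proof (cases "m = 0")
    case True then show ?thesis using gg_2[OF d w] by simp
  next
    case False
    let ?x = "Suc d - m"
    let ?v = "CL d [Suc (Suc d) - m..<Suc d] (gen d 1 (gen d 2 w))"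
    have IH: "(gg d ^^ m) (2 # w) = ?x # ?v" using Suc False by simp
    have x: "3 \<le> ?x" "?x \<le> d" using Suc False by auto
    have vS: "set ?v \<subseteq> {1..d}" using d w gen12_S[OF d w] Suc.prems by (intro CL_S) (auto simp del: upt_Suc)
    have "(gg d ^^ Suc m) (2 # w) = gg d (?x # ?v)" using IH by simp
    also have "\<dots> = (?x - 1) # gen d ?x ?v" by (rule gg_x[OF d x vS])
    also have "[?x..<Suc d] = ?x # [Suc ?x..<Suc d]" using x by (intro upt_conv_Cons) simp
    then have "gen d ?x ?v = CL d [Suc (Suc d) - Suc m..<Suc d] (gen d 1 (gen d 2 w))"
      using Suc False by (simp add: Suc_diff_le)
    finally show ?thesis using Suc False by simp
  qed
qed

lemma hh_pow: assumes d: "3 \<le> d" and w: "set w \<subseteq> {1..d}"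
  shows "1 \<le> m \<Longrightarrow> m \<le> d - 2 \<Longrightarrow>
    (hh d ^^ m) (2 # w) = (m + 2) # CL d (rev [2..<m + 2]) w"
proof (induction m)
  case 0 then show ?case by simp
next
  case (Suc m)
  show ?case
  proof (cases "m = 0")
    case True
    have "hh d (2 # w) = Suc 2 # gen d 2 w" using d by (intro hh_x[OF d _ _ w]) auto
    then show ?thesis using True by (simp add: numeral_2_eq_2 numeral_3_eq_3)
  next
    case False
    let ?x = "m + 2"
    let ?v = "CL d (rev [2..<m + 2]) w"
    have IH: "(hh d ^^ m) (2 # w) = ?x # ?v" using Suc False by simp
    have x: "2 \<le> ?x" "?x < d" using Suc False by auto
    have vS: "set ?v \<subseteq> {1..d}" using d w Suc.prems by (intro CL_S) (auto simp del: upt_Suc)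
    have "(hh d ^^ Suc m) (2 # w) = hh d (?x # ?v)" using IH by simp
    also have "\<dots> = Suc ?x # gen d ?x ?v" by (rule hh_x[OF d x vS])
    also have "rev [2..<Suc m + 2] = ?x # rev [2..<m + 2]" by simp
    then have "gen d ?x ?v = CL d (rev [2..<Suc m + 2]) w" by simp
    finally show ?thesis by simp
  qed
qed

lemma gg_full: assumes d: "3 \<le> d" and w: "set w \<subseteq> {1..d}"
  shows "(gg d ^^ (d - 1)) (2 # w) = 2 # CL d ([3..<Suc d] @ [1, 2]) w"
  using gg_pow[OF d w, of "d - 1"] d by (simp add: CL_append numeral_3_eq_3 Suc_diff_le)

lemma hh_full: assumes d: "3 \<le> d" and w: "set w \<subseteq> {1..d}"
  shows "(hh d ^^ (d - 1)) (2 # w) = 2 # CL d (1 # rev [2..<Suc d]) w"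
proof -
  have e: "d - 1 = Suc (d - 2)" using d by simp
  have e2: "d - 2 + 2 = d" using d by simp
  have p: "(hh d ^^ (d - 2)) (2 # w) = d # CL d (rev [2..<d]) w"
    using hh_pow[OF d w, of "d - 2", unfolded e2] d by simp
  have vS: "set (CL d (rev [2..<d]) w) \<subseteq> {1..d}" using d w by (intro CL_S) (auto simp del: upt_Suc)
  have r: "rev [2..<Suc d] = d # rev [2..<d]" using d by simp
  show ?thesis unfolding e using p hh_d[OF d vS] r by simp
qed



lemma descent:
  fixes f \<phi> \<psi> c :: "'a list \<Rightarrow> 'a list" and S :: "'a list set"
  assumes k: "2 \<le> k"
    and fk: "\<forall>v\<in>S. (f ^^ k) (a # v) = a # \<phi> v"
    and \<phi>S: "\<forall>v\<in>S. \<phi> v \<in> S"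
    and hd: "\<forall>v\<in>S. \<forall>j. 0 < j \<and> j < k \<longrightarrow> (\<exists>y u. (f ^^ j) (a # v) = y # u \<and> y \<noteq> a)"
    and conto: "\<forall>u\<in>S. \<exists>v\<in>S. c v = u"
    and rel: "\<forall>v. c (\<phi> v) = \<psi> (c v)"
    and fixn: "\<forall>v\<in>S. (f ^^ n) (a # v) = a # v"
    and n: "0 < n"
    and S0: "[] \<in> S"
  shows "\<exists>m. 0 < m \<and> m < n \<and> (\<forall>u\<in>S. (\<psi> ^^ m) u = u)"
proof -
  have phiS: "(\<phi> ^^ q) v \<in> S" if "v \<in> S" for q v
    using that \<phi>S by (induction q) auto
  have fq: "(f ^^ (q * k)) (a # v) = a # (\<phi> ^^ q) v" if "v \<in> S" for q v
  proof (induction q)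
    case 0 then show ?case by simp
  next
    case (Suc q)
    have "(f ^^ (Suc q * k)) (a # v) = (f ^^ k) ((f ^^ (q * k)) (a # v))"
      by (simp add: funpow_add)
    also have "\<dots> = a # \<phi> ((\<phi> ^^ q) v)" using Suc fk phiS[OF that] by simp
    finally show ?case by simp
  qed
  have crel: "c ((\<phi> ^^ q) v) = (\<psi> ^^ q) (c v)" for q v
    by (induction q) (auto simp: rel)
  define q r where "q = n div k" and "r = n mod k"
  have nqr: "n = r + q * k" unfolding q_def r_def by simp
  have rk: "r < k" unfolding r_def using k by simp
  have r0: "r = 0"
  proof (rule ccontr)
    assume "r \<noteq> 0"
    have "(f ^^ n) (a # []) = (f ^^ r) ((f ^^ (q * k)) (a # []))" unfolding nqr by (simp add: funpow_add)
    also have "\<dots> = (f ^^ r) (a # (\<phi> ^^ q) [])" using fq S0 by simp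
    finally have "(f ^^ r) (a # (\<phi> ^^ q) []) = a # []" using fixn S0 by simp
    moreover obtain y u where "(f ^^ r) (a # (\<phi> ^^ q) []) = y # u" "y \<noteq> a"
      using hd phiS[OF S0, of q] \<open>r \<noteq> 0\<close> rk by blast
    ultimately show False by simp
  qed
  have q0: "0 < q" using n nqr r0 by (cases q) auto
  have qn: "q < n" using nqr r0 k q0 by (simp add: less_le_trans[of q "2*q"])
  have pq: "(\<phi> ^^ q) v = v" if "v \<in> S" for v
    using fq[OF that, of q] fixn that nqr r0 by simp
  show ?thesis
  proof (intro exI conjI ballI)
    fix u assume "u \<in> S"
    then obtain v where "v \<in> S" "c v = u" using conto by blast
    then show "(\<psi> ^^ q) u = u" using crel[of q v] pq by simp
  qed (use q0 qn in auto)
qed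



abbreviation SS :: "nat \<Rightarrow> nat list set" where "SS d \<equiv> {w. set w \<subseteq> {1..d}}"

lemma ups: "3 \<le> d \<Longrightarrow> [1..<Suc d] = 1 # 2 # [3..<Suc d]"
  using upt_conv_Cons[of 1 "Suc d"] upt_conv_Cons[of 2 "Suc d"] by (simp add: numeral_2_eq_2 numeral_3_eq_3)

lemma rup: "3 \<le> d \<Longrightarrow> rev [1..<Suc d] = rev [2..<Suc d] @ [1]"
  using upt_conv_Cons[of 1 "Suc d"] by (simp add: numeral_2_eq_2 del: upt_Suc)

lemma CL_SS: "0 < d \<Longrightarrow> set js \<subseteq> {1..d} \<Longrightarrow> \<forall>v\<in>SS d. CL d js v \<in> SS d"
  using CL_S by blast

lemma CL_onto_SS: "2 \<le> d \<Longrightarrow> set js \<subseteq> {1..d} \<Longrightarrow> \<forall>u\<in>SS d. \<exists>v\<in>SS d. CL d js v = u"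
proof
  fix u assume "2 \<le> d" "set js \<subseteq> {1..d}" "u \<in> SS d"
  then obtain v where "set v \<subseteq> {1..d}" "CL d js v = u" using CL_onto[of d js u] by auto
  then show "\<exists>v\<in>SS d. CL d js v = u" by blast
qed

lemma g1: "3 \<le> d \<Longrightarrow> \<forall>v\<in>SS d. (gg d ^^ (d - 1)) (2 # v) = 2 # CL d ([3..<Suc d] @ [1, 2]) v"
  using gg_full by blast
lemma h1: "3 \<le> d \<Longrightarrow> \<forall>v\<in>SS d. (hh d ^^ (d - 1)) (2 # v) = 2 # CL d (1 # rev [2..<Suc d]) v"
  using hh_full by blast
lemma g3: "3 \<le> d \<Longrightarrow> \<forall>v\<in>SS d. \<forall>j. 0 < j \<and> j < d - 1 \<longrightarrow> (\<exists>y u. (gg d ^^ j) (2 # v) = y # u \<and> y \<noteq> 2)"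
proof (intro ballI allI impI)
  fix v j assume "3 \<le> d" "v \<in> SS d" "0 < j \<and> j < d - 1"
  then show "\<exists>y u. (gg d ^^ j) (2 # v) = y # u \<and> y \<noteq> 2" using gg_pow[of d v j] by auto
qed
lemma h3: "3 \<le> d \<Longrightarrow> \<forall>v\<in>SS d. \<forall>j. 0 < j \<and> j < d - 1 \<longrightarrow> (\<exists>y u. (hh d ^^ j) (2 # v) = y # u \<and> y \<noteq> 2)"
proof (intro ballI allI impI)
  fix v j assume "3 \<le> d" "v \<in> SS d" "0 < j \<and> j < d - 1"
  then show "\<exists>y u. (hh d ^^ j) (2 # v) = y # u \<and> y \<noteq> 2" using hh_pow[of d v j] by auto
qed
lemma g5: "3 \<le> d \<Longrightarrow> \<forall>v. CL d [1, 2] (CL d ([3..<Suc d] @ [1, 2]) v) = hh d (CL d [1, 2] v)"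
  unfolding hh_def ups by (simp add: CL_append)
lemma h5: "3 \<le> d \<Longrightarrow> \<forall>v. CL d (rev [2..<Suc d]) (CL d (1 # rev [2..<Suc d]) v) = gg d (CL d (rev [2..<Suc d]) v)"
proof -
  assume d: "3 \<le> d"
  have "gg d = CL d (rev [2..<Suc d]) \<circ> gen d 1" unfolding gg_def rup[OF d] CL_append by (simp del: upt_Suc)
  then show ?thesis by (simp del: upt_Suc)
qed
lemma sets: "3 \<le> d \<Longrightarrow> set (rev [2..<Suc d]) \<subseteq> {1..d}" "3 \<le> d \<Longrightarrow> set (1 # rev [2..<Suc d]) \<subseteq> {1..d}"
  "3 \<le> d \<Longrightarrow> set ([3..<Suc d] @ [1, 2]) \<subseteq> {1..d}" "3 \<le> d \<Longrightarrow> set ([1, 2]) \<subseteq> {1..(d::nat)}"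
  by (auto simp del: upt_Suc)

lemma inf_both:
  assumes d: "3 \<le> d"
  shows "0 < n \<Longrightarrow> (\<exists>w\<in>SS d. (gg d ^^ n) w \<noteq> w) \<and> (\<exists>w\<in>SS d. (hh d ^^ n) w \<noteq> w)"
proof (induction n rule: less_induct)
  case (less n)
  have S0: "[] \<in> SS d" by simp
  have two: "(2::nat) \<in> {1..d}" using d by simp
  have k: "2 \<le> d - 1" using d by simp
  have d0: "0 < d" "2 \<le> d" using d by auto
  have G: "\<exists>w\<in>SS d. (gg d ^^ n) w \<noteq> w"
  proof (rule ccontr)
    assume neg: "\<not> (\<exists>w\<in>SS d. (gg d ^^ n) w \<noteq> w)"
    have fixn: "\<forall>v\<in>SS d. (gg d ^^ n) (2 # v) = 2 # v"
    proof
      fix v assume "v \<in> SS d"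
      then have "2 # v \<in> SS d" using two by simp
      then show "(gg d ^^ n) (2 # v) = 2 # v" using neg by blast
    qed
    obtain m where m: "0 < m" "m < n" "\<forall>u\<in>SS d. (hh d ^^ m) u = u"
      using descent[OF k g1[OF d] CL_SS[OF d0(1) sets(3)[OF d]] g3[OF d] CL_onto_SS[OF d0(2) sets(4)[OF d]]
        g5[OF d] fixn less.prems S0] by blast
    then obtain w where "w \<in> SS d" "(hh d ^^ m) w \<noteq> w" using less.IH[of m] by blast
    then show False using m(3) by blast
  qed
  have Hh: "\<exists>w\<in>SS d. (hh d ^^ n) w \<noteq> w"
  proof (rule ccontr)
    assume neg: "\<not> (\<exists>w\<in>SS d. (hh d ^^ n) w \<noteq> w)"
    have fixn: "\<forall>v\<in>SS d. (hh d ^^ n) (2 # v) = 2 # v"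
    proof
      fix v assume "v \<in> SS d"
      then have "2 # v \<in> SS d" using two by simp
      then show "(hh d ^^ n) (2 # v) = 2 # v" using neg by blast
    qed
    obtain m where m: "0 < m" "m < n" "\<forall>u\<in>SS d. (gg d ^^ m) u = u"
      using descent[OF k h1[OF d] CL_SS[OF d0(1) sets(2)[OF d]] h3[OF d] CL_onto_SS[OF d0(2) sets(1)[OF d]]
        h5[OF d] fixn less.prems S0] by blast
    then obtain w where "w \<in> SS d" "(gg d ^^ m) w \<noteq> w" using less.IH[of m] by blast
    then show False using m(3) by blast
  qed
  show ?case using G Hh by blast
qed

lemma gg_inf: assumes "3 \<le> d" shows "infinite_order (gg d)"
  unfolding infinite_order_def
proof (intro allI impI)
  fix n :: nat assume "0 < n"
  then obtain w where "(gg d ^^ n) w \<noteq> w" using inf_both[OF assms] by blast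
  then show "gg d ^^ n \<noteq> id" by auto
qed

lemma gg_Gd: "gg d \<in> Gd d"
  unfolding gg_def by (rule CL_Gd) (auto simp del: upt_Suc)


theorem mainTheorem13:
  fixes d :: nat
  assumes "d \<ge> 3" and "odd d"
  shows "\<not> torsion_group (Gd d) \<and> \<not> torsion_free_group (Gd d)
    \<and> (\<exists>g \<in> Gd d. infinite_order g)
    \<and> (\<forall>i \<in> {1..d}. xi d i \<in> Gd d \<and> xi d i \<noteq> id
         \<and> (\<forall>x w. x \<in> {1..d} \<longrightarrow> set w \<subseteq> {1..d} \<longrightarrow> xi d i (x # w) = xi_perm d i x # w)
         \<and> has_order (xi d i) (if d = 3 then 3 else 2))"
proof -
  have d3: "3 \<le> d" using assms by simp
  have d2: "2 \<le> d" using d3 by simp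
  have ho: "has_order (xi d i) (if d = 3 then 3 else 2)" if i: "i \<in> {1..d}" for i
  proof (cases "d = 3")
    case True then show ?thesis using xi_order3[of i] i by simp
  next
    case False
    then have "4 \<le> d" using assms by presburger
    then show ?thesis using xi_order5[of d i] i False by simp
  qed
  have ne: "xi d i \<noteq> id" if i: "i \<in> {1..d}" for i
  proof -
    have "xi d i ^^ 1 \<noteq> id" using ho[OF i] unfolding has_order_def
      by (cases "d = 3") auto
    then show ?thesis by simp
  qed
  have per: "\<forall>i \<in> {1..d}. xi d i \<in> Gd d \<and> xi d i \<noteq> id
         \<and> (\<forall>x w. x \<in> {1..d} \<longrightarrow> set w \<subseteq> {1..d} \<longrightarrow> xi d i (x # w) = xi_perm d i x # w)
         \<and> has_order (xi d i) (if d = 3 then 3 else 2)"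
    using xi_Gd[OF d2] ne xi_Cons[OF d3] ho by blast
  have i1: "(1::nat) \<in> {1..d}" using d3 by simp
  have ntf: "\<not> torsion_free_group (Gd d)"
  proof
    assume tf: "torsion_free_group (Gd d)"
    have "has_order (xi d 1) (if d = 3 then 3 else 2)" using ho[OF i1] .
    then obtain k where "0 < k" "xi d 1 ^^ k = id" unfolding has_order_def by blast
    then show False using tf xi_Gd[OF d2 i1] ne[OF i1] unfolding torsion_free_group_def by blast
  qed
  have inf: "\<exists>g \<in> Gd d. infinite_order g" using gg_Gd gg_inf[OF d3] by blast
  have nt: "\<not> torsion_group (Gd d)"
    using gg_Gd gg_inf[OF d3] unfolding torsion_group_def infinite_order_def by blast
  show ?thesis using nt ntf inf per by blast
qed

end
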